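(* Let $\lambda>0$, $\rho>1$, let $X_1,X_2,\ldots$ be i.i.d. $\mathrm{Exp}(\lambda)$ and $M_n\coloneqq\frac{\log X_{(n)}-\log X_{(1)}}{\log\rho}+1$ where $X_{(1)},X_{(n)}$ are the minimum and maximum of $X_1,\ldots,X_n$. Then as $n\to\infty$, \[Y_n\coloneqq(M_n-1)\log\rho-\log n-\log\log n\implies\mathrm{Gumbel}(0,1),\] which implies that, for $n$ large, \[M_n\stackrel{\cdot}{\sim}\mathrm{Gumbel}\!\left(1+\frac{\log n+\log\log n}{\log\rho},\frac{1}{\log\rho}\right),\qquad \mathbb{E}M_n\sim1+\gamma+\frac{\log n+\log\log n}{\log\rho}\sim\frac{\log n}{\log\rho},\] \[\mathrm{Var}(M_n)\sim\frac{\pi^2}{6\log^2\rho},\qquad\mathrm{Skew}(M_n)\sim\frac{12\sqrt6\,\zeta(3)}{\pi^3}.\]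
   Context: $\mathrm{Exp}(\lambda)$ has density $\lambda e^{-\lambda x}$ on $(0,\infty)$. $\mathrm{Gumbel}(\mu,\sigma)$ has CDF $\exp(-\exp(-(x-\mu)/\sigma))$ on $\mathbb{R}$. $\implies$ denotes convergence in distribution; $X\stackrel{\cdot}{\sim}F$ means the law of $X$ is approximately $F$; $a_n\sim b_n$ means $a_n/b_n\to1$. $\gamma$ is Euler's constant, $\zeta(3)=\sum_{k\ge1}k^{-3}$, and $\mathrm{Skew}(X)=\mathbb{E}[((X-\mathbb{E}X)/\sqrt{\mathrm{Var}(X)})^3]$. *)

theory Defs
  imports "HOL-Probability.Probability" "HOL-Library.Landau_Symbols"
begin

definition gumbel_cdf :: "real \<Rightarrow> real \<Rightarrow> real \<Rightarrow> real" where
  "gumbel_cdf mu s x = exp (- exp (- (x - mu) / s))"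

definition (in prob_space) skewness :: "('a \<Rightarrow> real) \<Rightarrow> real" where
  "skewness Z = expectation (\<lambda>w. ((Z w - expectation Z) / sqrt (variance Z)) ^ 3)"

definition zeta3 :: real where
  "zeta3 = (\<Sum>k. 1 / (real (Suc k)) ^ 3)"

end

theory Submission
  imports Defs "HOL-Real_Asymp.Real_Asymp"
begin


abbreviation ed :: "real \<Rightarrow> real" where "ed \<equiv> exponential_density 1"

lemma ed_nonneg: "0 \<le> ed t"
  by (simp add: exponential_density_def)

lemma ed_meas[measurable]: "ed \<in> borel_measurable lborel"
  by simp

lemma pow_le_exp:
  assumes "0 \<le> (y::real)"
  shows "y ^ k / fact k \<le> exp y"
proof -
  have "summable (\<lambda>n. y^n /\<^sub>R fact n)" by (rule summable_exp_generic)
  then have "(\<Sum>n\<in>{k}. y^n /\<^sub>R fact n) \<le> (\<Sum>n. y^n /\<^sub>R fact n)"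
    by (intro sum_le_suminf) (auto simp: assms)
  thus ?thesis by (simp add: exp_def field_simps)
qed

lemma A0:
  assumes "s < 1"
  shows "has_bochner_integral lborel (\<lambda>t. ed t * exp (s * (- ln t))) (Gamma (1 - s))"
proof (rule has_bochner_integral_nn_integral)
  show "(\<lambda>t. ed t * exp (s * (- ln t))) \<in> borel_measurable lborel" by measurable
  show "AE t in lborel. 0 \<le> ed t * exp (s * (- ln t))" by (simp add: ed_nonneg)
  show "0 \<le> Gamma (1 - s)" using assms by (simp add: less_imp_le)
  have "(\<integral>\<^sup>+t. ennreal (ed t * exp (s * (- ln t))) \<partial>lborel)
       = (\<integral>\<^sup>+t. ennreal (indicator {0..} t * t powr ((1 - s) - 1) / exp t) \<partial>lborel)"
  proof (rule nn_integral_cong_AE)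
    show "AE t in lborel. ennreal (ed t * exp (s * (- ln t))) = ennreal (indicator {0..} t * t powr ((1 - s) - 1) / exp t)"
      using AE_lborel_singleton[of 0]
    proof eventually_elim
      case (elim t)
      show ?case
      proof (cases "t < 0")
        case True thus ?thesis by (simp add: exponential_density_def)
      next
        case False
        with elim have "t > 0" by simp
        thus ?thesis by (simp add: exponential_density_def powr_def exp_minus field_simps)
      qed
    qed
  qed
  also have "\<dots> = ennreal (Gamma (1 - s))"
    using Gamma_conv_nn_integral_real[of "1 - s"] assms by simp
  finally show "(\<integral>\<^sup>+t. ennreal (ed t * exp (s * (- ln t))) \<partial>lborel) = ennreal (Gamma (1 - s))" .
qed

lemma A1:
  assumes "0 \<le> a" "a < 1"
  shows "integrable lborel (\<lambda>t. ed t * exp (a * \<bar>ln t\<bar>))"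
proof (rule Bochner_Integration.integrable_bound)
  have i1: "integrable lborel (\<lambda>t. ed t * exp (a * (- ln t)))"
    using A0[of a] assms by (auto simp: has_bochner_integral_iff)
  have i2: "integrable lborel (\<lambda>t. ed t * exp ((-a) * (- ln t)))"
    using A0[of "-a"] assms by (auto simp: has_bochner_integral_iff)
  show "integrable lborel (\<lambda>t. ed t * exp (a * (- ln t)) + ed t * exp ((-a) * (- ln t)))"
    using i1 i2 by (rule Bochner_Integration.integrable_add)
  show "(\<lambda>t. ed t * exp (a * \<bar>ln t\<bar>)) \<in> borel_measurable lborel" by measurable
  show "AE t in lborel. norm (ed t * exp (a * \<bar>ln t\<bar>)) \<le> norm (ed t * exp (a * (- ln t)) + ed t * exp ((-a) * (- ln t)))"
  proof (rule AE_I2)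
    fix t
    have e: "exp (a * \<bar>ln t\<bar>) \<le> exp (a * (- ln t)) + exp ((-a) * (- ln t))"
      by (cases "ln t \<ge> 0") (auto simp: add_increasing add_increasing2)
    have "ed t * exp (a * \<bar>ln t\<bar>) \<le> ed t * (exp (a * (- ln t)) + exp ((-a) * (- ln t)))"
      using e ed_nonneg by (rule mult_left_mono)
    thus "norm (ed t * exp (a * \<bar>ln t\<bar>)) \<le> norm (ed t * exp (a * (- ln t)) + ed t * exp ((-a) * (- ln t)))"
      using ed_nonneg[of t] by (simp add: distrib_left)
  qed
qed

lemma A2abs: "integrable lborel (\<lambda>t. ed t * \<bar>ln t\<bar> ^ k)"
proof (rule Bochner_Integration.integrable_bound)
  show "integrable lborel (\<lambda>t. (fact k * 2 ^ k) * (ed t * exp ((1/2) * \<bar>ln t\<bar>)))"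
    using A1[of "1/2"] by (intro integrable_mult_right) simp
  show "(\<lambda>t. ed t * \<bar>ln t\<bar> ^ k) \<in> borel_measurable lborel" by measurable
  show "AE t in lborel. norm (ed t * \<bar>ln t\<bar> ^ k) \<le> norm ((fact k * 2 ^ k) * (ed t * exp ((1/2) * \<bar>ln t\<bar>)))"
  proof (rule AE_I2)
    fix t :: real
    have "(\<bar>ln t\<bar> / 2) ^ k / fact k \<le> exp (\<bar>ln t\<bar> / 2)" by (rule pow_le_exp) simp
    hence "\<bar>ln t\<bar> ^ k \<le> fact k * 2 ^ k * exp ((1/2) * \<bar>ln t\<bar>)"
      by (simp add: field_simps power_divide)
    hence "ed t * \<bar>ln t\<bar> ^ k \<le> ed t * (fact k * 2 ^ k * exp ((1/2) * \<bar>ln t\<bar>))"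
      using ed_nonneg by (rule mult_left_mono)
    thus "norm (ed t * \<bar>ln t\<bar> ^ k) \<le> norm ((fact k * 2 ^ k) * (ed t * exp ((1/2) * \<bar>ln t\<bar>)))"
      using ed_nonneg[of t] by (simp add: mult_ac)
  qed
qed

lemma A2: "integrable lborel (\<lambda>t. ed t * (- ln t) ^ k)"
proof (rule Bochner_Integration.integrable_bound[OF A2abs[of k]])
  show "(\<lambda>t. ed t * (- ln t) ^ k) \<in> borel_measurable lborel" by measurable
  show "AE t in lborel. norm (ed t * (- ln t) ^ k) \<le> norm (ed t * \<bar>ln t\<bar> ^ k)"
    using ed_nonneg by (simp add: abs_mult power_abs)
qed

definition mu :: "nat \<Rightarrow> real" where "mu k = (\<integral>t. ed t * (- ln t) ^ k \<partial>lborel)"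

lemma A3:
  assumes s: "\<bar>s\<bar> < 1"
  shows "(\<lambda>k. mu k / fact k * s ^ k) sums Gamma (1 - s)"
proof -
  define f where "f k t = s ^ k / fact k * (ed t * (- ln t) ^ k)" for k t
  have int: "integrable lborel (f k)" for k
    unfolding f_def by (intro integrable_mult_right A2)
  have ser: "(\<lambda>k. f k t) sums (ed t * exp (s * (- ln t)))" for t
  proof -
    have "(\<lambda>k. (s * (- ln t)) ^ k /\<^sub>R fact k) sums exp (s * (- ln t))" by (rule exp_converges)
    hence "(\<lambda>k. ed t * ((s * (- ln t)) ^ k /\<^sub>R fact k)) sums (ed t * exp (s * (- ln t)))"
      by (rule sums_mult)
    moreover have "(\<lambda>k. f k t) = (\<lambda>k. ed t * ((s * (- ln t)) ^ k /\<^sub>R fact k))"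
      unfolding f_def power_mult_distrib by (simp add: fun_eq_iff divide_inverse mult_ac)
    ultimately show ?thesis by simp
  qed
  have nser: "summable (\<lambda>k. norm (f k t))" for t
  proof -
    have "(\<lambda>k. (\<bar>s\<bar> * \<bar>ln t\<bar>) ^ k /\<^sub>R fact k) sums exp (\<bar>s\<bar> * \<bar>ln t\<bar>)" by (rule exp_converges)
    hence "(\<lambda>k. ed t * ((\<bar>s\<bar> * \<bar>ln t\<bar>) ^ k /\<^sub>R fact k)) sums (ed t * exp (\<bar>s\<bar> * \<bar>ln t\<bar>))"
      by (rule sums_mult)
    hence "summable (\<lambda>k. ed t * ((\<bar>s\<bar> * \<bar>ln t\<bar>) ^ k /\<^sub>R fact k))" by (rule sums_summable)
    moreover have "norm (f k t) = ed t * ((\<bar>s\<bar> * \<bar>ln t\<bar>) ^ k /\<^sub>R fact k)" for k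
      unfolding f_def using ed_nonneg[of t]
      by (simp add: abs_mult power_abs power_mult_distrib field_simps)
    ultimately show ?thesis by simp
  qed
  have nint: "(\<integral>t. norm (f k t) \<partial>lborel) = (\<integral>t. ed t * ((\<bar>s\<bar> * \<bar>ln t\<bar>) ^ k / fact k) \<partial>lborel)" for k
    unfolding f_def
    by (intro Bochner_Integration.integral_cong refl) (use ed_nonneg in \<open>simp add: abs_mult power_abs power_mult_distrib field_simps\<close>)
  have sumint: "summable (\<lambda>k. \<integral>t. norm (f k t) \<partial>lborel)"
  proof (rule summableI_nonneg_bounded)
    show "0 \<le> (\<integral>t. norm (f k t) \<partial>lborel)" for k by simp
    fix N
    have "(\<Sum>k<N. \<integral>t. norm (f k t) \<partial>lborel) = (\<integral>t. (\<Sum>k<N. norm (f k t)) \<partial>lborel)"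
      by (rule Bochner_Integration.integral_sum[symmetric]) (intro integrable_norm int)
    also have "\<dots> \<le> (\<integral>t. ed t * exp (\<bar>s\<bar> * \<bar>ln t\<bar>) \<partial>lborel)"
    proof (rule Bochner_Integration.integral_mono)
      show "integrable lborel (\<lambda>t. \<Sum>k<N. norm (f k t))"
        by (intro Bochner_Integration.integrable_sum integrable_norm int)
      show "integrable lborel (\<lambda>t. ed t * exp (\<bar>s\<bar> * \<bar>ln t\<bar>))"
        by (intro A1) (use s in auto)
      fix t
      have "(\<Sum>k<N. norm (f k t)) \<le> (\<Sum>k. norm (f k t))"
        by (intro sum_le_suminf nser) auto
      also have "(\<Sum>k. norm (f k t)) = (\<Sum>k. ed t * ((\<bar>s\<bar> * \<bar>ln t\<bar>) ^ k /\<^sub>R fact k))"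
        unfolding f_def
        by (intro suminf_cong) (use ed_nonneg[of t] in \<open>simp add: abs_mult power_abs power_mult_distrib field_simps\<close>)
      also have "\<dots> = ed t * exp (\<bar>s\<bar> * \<bar>ln t\<bar>)"
        by (intro sums_unique[symmetric] sums_mult exp_converges)
      finally show "(\<Sum>k<N. norm (f k t)) \<le> ed t * exp (\<bar>s\<bar> * \<bar>ln t\<bar>)" .
    qed
    finally show "(\<Sum>k<N. \<integral>t. norm (f k t) \<partial>lborel) \<le> (\<integral>t. ed t * exp (\<bar>s\<bar> * \<bar>ln t\<bar>) \<partial>lborel)" .
  qed
  have "(\<lambda>k. integral\<^sup>L lborel (f k)) sums (\<integral>t. (\<Sum>k. f k t) \<partial>lborel)"
    by (rule sums_integral[OF int]) (use nser sumint in \<open>auto simp del: real_norm_def\<close>)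
  moreover have "(\<integral>t. (\<Sum>k. f k t) \<partial>lborel) = Gamma (1 - s)"
  proof -
    have "(\<integral>t. (\<Sum>k. f k t) \<partial>lborel) = (\<integral>t. ed t * exp (s * (- ln t)) \<partial>lborel)"
      using ser by (intro Bochner_Integration.integral_cong refl) (simp add: sums_iff)
    also have "\<dots> = Gamma (1 - s)"
      using A0[of s] s by (simp add: has_bochner_integral_iff)
    finally show ?thesis .
  qed
  moreover have "integral\<^sup>L lborel (f k) = mu k / fact k * s ^ k" for k
    unfolding f_def mu_def by simp
  ultimately show ?thesis by simp
qed

lemma not_nonpos_Int: "0 < (x::real) \<Longrightarrow> x \<notin> \<int>\<^sub>\<le>\<^sub>0"
  using nonpos_Ints_nonpos by force

lemma dGamma1: "(s::real) < 1 \<Longrightarrow> ((\<lambda>s. Gamma (1 - s)) has_field_derivative - (Gamma (1 - s) * Digamma (1 - s))) (at s)"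
  by (auto intro!: derivative_eq_intros DERIV_chain2[OF has_field_derivative_Gamma] not_nonpos_Int)

lemma dPoly1: "(s::real) < 1 \<Longrightarrow> ((\<lambda>s. Polygamma n (1 - s)) has_field_derivative - Polygamma (Suc n) (1 - s)) (at s)"
  by (auto intro!: derivative_eq_intros DERIV_chain2[OF has_field_derivative_Polygamma] not_nonpos_Int)

lemma Polygamma_1_1: "Polygamma 1 (1::real) = pi^2 / 6"
proof -
  have "(\<lambda>k. inverse ((1 + real k) ^ 2)) sums (pi^2/6)"
    using inverse_squares_sums by (simp add: inverse_eq_divide add.commute)
  hence S: "(\<Sum>k. inverse ((1 + real k) ^ 2)) = pi^2/6" by (simp add: sums_iff)
  have "Polygamma 1 (1::real) = (\<Sum>k. inverse ((1 + real k) ^ 2))"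
    by (simp add: Polygamma_def numeral_2_eq_2 del: power_Suc power_inverse)
  thus ?thesis using S by simp
qed

lemma Polygamma_2_1: "Polygamma 2 (1::real) = - 2 * zeta3"
proof -
  have "(\<Sum>k. inverse ((1 + real k) ^ 3)) = zeta3"
    unfolding zeta3_def by (intro suminf_cong) (simp add: inverse_eq_divide add.commute)
  thus ?thesis by (simp add: Polygamma_def numeral_3_eq_3 numeral_2_eq_2)
qed

lemma A4:
  shows "mu 1 = euler_mascheroni"
    and "mu 2 = euler_mascheroni^2 + pi^2/6"
    and "mu 3 = euler_mascheroni^3 + euler_mascheroni * pi^2/2 + 2 * zeta3"
proof -
  define c where "c k = mu k / fact k" for k
  define S where "S = {-1<..<(1::real)}"
  have S: "open S" "0 \<in> S" unfolding S_def by auto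
  have Sn: "s \<in> S \<longleftrightarrow> norm s < 1" for s unfolding S_def by auto
  have sm0: "summable (\<lambda>k. c k * s^k)" if "norm s < 1" for s
    using A3[of s] that unfolding c_def by (auto intro: sums_summable)
  have sm1: "summable (\<lambda>k. diffs c k * s^k)" if "norm s < 1" for s
    by (rule termdiff_converges[OF that sm0])
  have sm2: "summable (\<lambda>k. diffs (diffs c) k * s^k)" if "norm s < 1" for s
    by (rule termdiff_converges[OF that sm1])
  define F0 where "F0 s = (\<Sum>k. c k * s^k)" for s :: real
  define F1 where "F1 s = (\<Sum>k. diffs c k * s^k)" for s :: real
  define F2 where "F2 s = (\<Sum>k. diffs (diffs c) k * s^k)" for s :: real
  define F3 where "F3 s = (\<Sum>k. diffs (diffs (diffs c)) k * s^k)" for s :: real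
  have d0: "(F0 has_field_derivative F1 s) (at s)" if "norm s < 1" for s
    unfolding F0_def[abs_def] F1_def by (rule termdiffs_strong'[OF sm0 that])
  have d1: "(F1 has_field_derivative F2 s) (at s)" if "norm s < 1" for s
    unfolding F1_def[abs_def] F2_def by (rule termdiffs_strong'[OF sm1 that])
  have d2: "(F2 has_field_derivative F3 s) (at s)" if "norm s < 1" for s
    unfolding F2_def[abs_def] F3_def by (rule termdiffs_strong'[OF sm2 that])
  define \<psi>0 where "\<psi>0 s = Polygamma 0 (1 - s)" for s :: real
  define \<psi>1 where "\<psi>1 s = Polygamma 1 (1 - s)" for s :: real
  define \<psi>2 where "\<psi>2 s = Polygamma 2 (1 - s)" for s :: real
  define G where "G s = Gamma (1 - s)" for s :: real
  define g1 where "g1 s = - (G s * \<psi>0 s)" for s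
  define g2 where "g2 s = G s * (\<psi>0 s ^ 2 + \<psi>1 s)" for s
  define g3 where "g3 s = - (G s * (\<psi>0 s ^ 3 + 3 * \<psi>0 s * \<psi>1 s + \<psi>2 s))" for s
  have dG: "(G has_field_derivative g1 s) (at s)" if "s < 1" for s
    unfolding G_def[abs_def] g1_def G_def \<psi>0_def using dGamma1[OF that] by simp
  have dp0: "(\<psi>0 has_field_derivative - \<psi>1 s) (at s)" if "s < 1" for s
    unfolding \<psi>0_def[abs_def] \<psi>1_def using dPoly1[OF that, of 0] by simp
  have dp1: "(\<psi>1 has_field_derivative - \<psi>2 s) (at s)" if "s < 1" for s
    unfolding \<psi>1_def[abs_def] \<psi>2_def using dPoly1[OF that, of 1] by (simp add: numeral_2_eq_2)
  have dg1: "(g1 has_field_derivative g2 s) (at s)" if "s < 1" for s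
  proof -
    have "((\<lambda>s. - (G s * \<psi>0 s)) has_field_derivative g2 s) (at s)"
      by (rule derivative_eq_intros dG dp0 that refl)+ (simp add: g1_def g2_def algebra_simps power2_eq_square)
    thus ?thesis unfolding g1_def[abs_def] .
  qed
  have dg2: "(g2 has_field_derivative g3 s) (at s)" if "s < 1" for s
  proof -
    have "((\<lambda>s. G s * (\<psi>0 s ^ 2 + \<psi>1 s)) has_field_derivative g3 s) (at s)"
      by (rule derivative_eq_intros dG dp0 dp1 that refl)+ 
         (simp add: g1_def g3_def algebra_simps power2_eq_square power3_eq_cube)
    thus ?thesis unfolding g2_def[abs_def] .
  qed
  have e0: "F0 s = G s" if "s \<in> S" for s
    using A3[of s] that unfolding Sn F0_def G_def c_def by (simp add: sums_iff)
  have e1: "F1 s = g1 s" if "s \<in> S" for s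
  proof -
    have "(F0 has_field_derivative g1 s) (at s)"
      by (rule has_field_derivative_transform_within_open[OF dG S(1) that])
         (use that e0 Sn in auto)
    thus ?thesis using d0[of s] that Sn by (auto intro: DERIV_unique)
  qed
  have e2: "F2 s = g2 s" if "s \<in> S" for s
  proof -
    have "(F1 has_field_derivative g2 s) (at s)"
      by (rule has_field_derivative_transform_within_open[OF dg1 S(1) that])
         (use that e1 Sn in auto)
    thus ?thesis using d1[of s] that Sn by (auto intro: DERIV_unique)
  qed
  have e3: "F3 s = g3 s" if "s \<in> S" for s
  proof -
    have "(F2 has_field_derivative g3 s) (at s)"
      by (rule has_field_derivative_transform_within_open[OF dg2 S(1) that])
         (use that e2 Sn in auto)
    thus ?thesis using d2[of s] that Sn by (auto intro: DERIV_unique)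
  qed
  have v: "G 0 = 1" "\<psi>0 0 = - euler_mascheroni" "\<psi>1 0 = pi^2/6" "\<psi>2 0 = - 2 * zeta3"
    unfolding G_def \<psi>0_def \<psi>1_def \<psi>2_def using Polygamma_1_1 Polygamma_2_1 by simp_all
  have "F1 0 = c 1" "F2 0 = 2 * c 2" "F3 0 = 6 * c 3"
    unfolding F1_def F2_def F3_def by (simp_all add: diffs_def eval_nat_numeral)
  moreover have "F1 0 = euler_mascheroni" "F2 0 = euler_mascheroni^2 + pi^2/6"
     "F3 0 = euler_mascheroni^3 + euler_mascheroni * pi^2/2 + 2 * zeta3"
    using e1[OF S(2)] e2[OF S(2)] e3[OF S(2)] unfolding g1_def g2_def g3_def v
    by (simp_all add: algebra_simps power2_eq_square power3_eq_cube)
  ultimately show "mu 1 = euler_mascheroni"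
    and "mu 2 = euler_mascheroni^2 + pi^2/6"
    and "mu 3 = euler_mascheroni^3 + euler_mascheroni * pi^2/2 + 2 * zeta3"
    unfolding c_def by (simp_all add: eval_nat_numeral)
qed




locale gum = prob_space M for M :: "'a measure" +
  fixes X :: "nat \<Rightarrow> 'a \<Rightarrow> real" and l :: real
  assumes l_pos: "0 < l"
    and indep: "indep_vars (\<lambda>_. borel) X UNIV"
    and expo: "\<And>i. distributed M lborel (X i) (exponential_density l)"
begin

lemma X_meas[measurable]: "X i \<in> borel_measurable M"
  using distributed_measurable[OF expo[of i]] by simp

definition A where "A n w = Min ((\<lambda>i. X i w) ` {1..n})"
definition B where "B n w = Max ((\<lambda>i. X i w) ` {1..n})"
definition V where "V n w = real n * l * A n w"
definition Z where "Z n w = - ln (V n w)"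

lemma A_meas[measurable]: "A n \<in> borel_measurable M"
  unfolding A_def by measurable
lemma B_meas[measurable]: "B n \<in> borel_measurable M"
  unfolding B_def by measurable
lemma V_meas[measurable]: "V n \<in> borel_measurable M"
  unfolding V_def by measurable
lemma Z_meas[measurable]: "Z n \<in> borel_measurable M"
  unfolding Z_def by measurable

lemma AE_pos: "AE w in M. \<forall>i. 0 < X i w"
proof -
  have "AE w in M. 0 < X i w" for i
  proof -
    have "AE x in lborel. 0 < ennreal (exponential_density l x) \<longrightarrow> 0 < x"
      using AE_lborel_singleton[of 0]
      by eventually_elim (auto simp: exponential_density_def)
    thus ?thesis using distributed_AE2[OF expo[of i], of "\<lambda>x. 0 < x"] by simp
  qed
  thus ?thesis by (simp add: AE_all_countable)
qed

lemma A_pos: "1 \<le> n \<Longrightarrow> (\<forall>i. 0 < X i w) \<Longrightarrow> 0 < A n w"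
  unfolding A_def by (subst Min_gr_iff) auto

lemma B_pos: "1 \<le> n \<Longrightarrow> (\<forall>i. 0 < X i w) \<Longrightarrow> 0 < B n w"
  unfolding B_def by (subst Max_gr_iff) (auto intro: bexI[of _ 1])

lemma X1_le_B: "1 \<le> n \<Longrightarrow> X 1 w \<le> B n w"
  unfolding B_def by (intro Max_ge) auto

lemma V_distr: assumes "1 \<le> n" shows "distributed M lborel (V n) ed"
proof -
  have "distributed M lborel (\<lambda>w. Min ((\<lambda>i. X i w) ` {1..n})) (exponential_density (\<Sum>i\<in>{1..n}. l))"
    using assms by (intro exponential_distributed_Min expo l_pos indep_vars_subset[OF indep]) auto
  hence d: "distributed M lborel (A n) (exponential_density (real n * l))"
    by (simp add: A_def[abs_def])
  have "distributed M lborel (\<lambda>w. (real n * l) * A n w) (exponential_density ((real n * l) / (real n * l)))"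
    using assms l_pos by (intro erlang_distributed_mult_const[OF d]) auto
  thus ?thesis using assms l_pos by (simp add: V_def[abs_def])
qed

lemma U_distr: "distributed M lborel (\<lambda>w. l * X i w) ed"
proof -
  have "distributed M lborel (\<lambda>w. l * X i w) (exponential_density (l / l))"
    using l_pos by (intro erlang_distributed_mult_const[OF expo]) auto
  thus ?thesis using l_pos by simp
qed

lemma Z_pow: assumes "1 \<le> n"
  shows "integrable M (\<lambda>w. Z n w ^ k)" "expectation (\<lambda>w. Z n w ^ k) = mu k"
proof -
  have "integrable lborel (\<lambda>t. ed t * (- ln t) ^ k)" by (rule A2)
  thus "integrable M (\<lambda>w. Z n w ^ k)"
    using distributed_integrable[OF V_distr[OF assms], of "\<lambda>t. (- ln t) ^ k"]
    by (simp add: Z_def[abs_def] ed_nonneg)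
  show "expectation (\<lambda>w. Z n w ^ k) = mu k"
    using distributed_integral[OF V_distr[OF assms], of "\<lambda>t. (- ln t) ^ k"]
    by (simp add: Z_def[abs_def] ed_nonneg mu_def)
qed

definition K where "K k = (\<integral>t. ed t * \<bar>ln t\<bar> ^ k \<partial>lborel)"

lemma Z_abs: assumes "1 \<le> n"
  shows "integrable M (\<lambda>w. \<bar>Z n w\<bar> ^ k)" "expectation (\<lambda>w. \<bar>Z n w\<bar> ^ k) = K k"
proof -
  have "integrable lborel (\<lambda>t. ed t * \<bar>ln t\<bar> ^ k)" by (rule A2abs)
  thus "integrable M (\<lambda>w. \<bar>Z n w\<bar> ^ k)"
    using distributed_integrable[OF V_distr[OF assms], of "\<lambda>t. \<bar>ln t\<bar> ^ k"]
    by (simp add: Z_def[abs_def] ed_nonneg)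
  show "expectation (\<lambda>w. \<bar>Z n w\<bar> ^ k) = K k"
    using distributed_integral[OF V_distr[OF assms], of "\<lambda>t. \<bar>ln t\<bar> ^ k"]
    by (simp add: Z_def[abs_def] ed_nonneg K_def)
qed

lemma R_abs: "integrable M (\<lambda>w. \<bar>ln (l * X i w)\<bar> ^ k)" "expectation (\<lambda>w. \<bar>ln (l * X i w)\<bar> ^ k) = K k"
proof -
  have "integrable lborel (\<lambda>t. ed t * \<bar>ln t\<bar> ^ k)" by (rule A2abs)
  thus "integrable M (\<lambda>w. \<bar>ln (l * X i w)\<bar> ^ k)"
    using distributed_integrable[OF U_distr, of "\<lambda>t. \<bar>ln t\<bar> ^ k"]
    by (simp add: ed_nonneg)
  show "expectation (\<lambda>w. \<bar>ln (l * X i w)\<bar> ^ k) = K k"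
    using distributed_integral[OF U_distr, of "\<lambda>t. \<bar>ln t\<bar> ^ k"]
    by (simp add: ed_nonneg K_def)
qed

lemma V_gt: "1 \<le> n \<Longrightarrow> 0 \<le> a \<Longrightarrow> prob {w \<in> space M. a < V n w} = exp (- a)"
  using exponential_distributedD_gt[OF V_distr, of n a] by simp

lemma B_le: assumes "1 \<le> n" "0 \<le> c"
  shows "prob {w \<in> space M. B n w \<le> c} = (1 - exp (- c * l)) ^ n"
proof -
  have "{w \<in> space M. B n w \<le> c} = (\<Inter>i\<in>{1..n}. X i -` {..c} \<inter> space M)"
    using assms by (auto simp: B_def)
  moreover have "prob (\<Inter>i\<in>{1..n}. X i -` {..c} \<inter> space M) = (\<Prod>i\<in>{1..n}. prob (X i -` {..c} \<inter> space M))"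
    by (rule indep_varsD[OF indep]) (use assms in auto)
  ultimately have "prob {w \<in> space M. B n w \<le> c} = (\<Prod>i\<in>{1..n}. prob (X i -` {..c} \<inter> space M))"
    by simp
  also have "\<dots> = (\<Prod>i\<in>{1..n}. 1 - exp (- c * l))"
  proof (intro prod.cong refl)
    fix i
    have "X i -` {..c} \<inter> space M = {w \<in> space M. X i w \<le> c}" by auto
    thus "prob (X i -` {..c} \<inter> space M) = 1 - exp (- c * l)"
      using exponential_distributedD_le[OF expo assms(2) l_pos] by simp
  qed
  finally show ?thesis by simp
qed

end



lemma C1:
  assumes c: "0 \<le> c"
  shows "has_bochner_integral lborel (\<lambda>t. ed t * max (t - c) 0 ^ 3) (6 * exp (- c))"
proof (rule has_bochner_integral_nn_integral)
  show "(\<lambda>t. ed t * max (t - c) 0 ^ 3) \<in> borel_measurable lborel" by measurable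
  show "AE t in lborel. 0 \<le> ed t * max (t - c) 0 ^ 3" by (simp add: ed_nonneg)
  show "0 \<le> 6 * exp (- c)" by simp
  have "(\<integral>\<^sup>+t. ennreal (ed t * max (t - c) 0 ^ 3) \<partial>lborel)
      = ennreal \<bar>1::real\<bar> * (\<integral>\<^sup>+u. ennreal (ed (c + 1 * u) * max ((c + 1 * u) - c) 0 ^ 3) \<partial>lborel)"
    by (rule nn_integral_real_affine[where c=1 and t=c]) auto
  also have "\<dots> = (\<integral>\<^sup>+u. ennreal (exp (- c)) * (ennreal (u ^ 3 * exp (- u)) * indicator {0..} u) \<partial>lborel)"
    unfolding abs_one ennreal_1 mult_1
    apply (intro nn_integral_cong)
    subgoal for u
      using c by (cases "u < 0") (auto simp: exponential_density_def ennreal_mult'[symmetric] exp_diff exp_minus field_simps)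
    done
  also have "\<dots> = ennreal (exp (- c)) * (\<integral>\<^sup>+u. ennreal (u ^ 3 * exp (- u)) * indicator {0..} u \<partial>lborel)"
    by (rule nn_integral_cmult) auto
  also have "\<dots> = ennreal (6 * exp (- c))"
    by (subst nn_intergal_power_times_exp_Ici) (simp add: ennreal_mult' eval_nat_numeral mult.commute)
  finally show "(\<integral>\<^sup>+t. ennreal (ed t * max (t - c) 0 ^ 3) \<partial>lborel) = ennreal (6 * exp (- c))" .
qed

lemma cube_sum_le: "0 \<le> a \<Longrightarrow> 0 \<le> b \<Longrightarrow> (a + b) ^ 3 \<le> 4 * (a ^ 3 + (b::real) ^ 3)"
proof -
  assume a: "0 \<le> a" and b: "0 \<le> b"
  have "0 \<le> (a + b) * (a - b)^2" using a b by simp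
  thus ?thesis by (simp add: power2_eq_square power3_eq_cube algebra_simps)
qed

lemma amgm_R:
  fixes d y :: real
  assumes d: "0 < d"
  shows "y \<le> d * y ^ 2 + 1 / d"
proof -
  have "0 \<le> (d*y - 1)^2" by simp
  hence "2*d*y \<le> d^2*y^2 + 1" by (simp add: power2_eq_square algebra_simps)
  moreover have "d * (d*y^2 + 1/d) = d^2*y^2 + 1" using d by (simp add: field_simps power2_eq_square)
  ultimately have "d * (2*y) \<le> d * (d*y^2 + 1/d)" by simp
  hence "2*y \<le> d*y^2 + 1/d" using d by (rule mult_left_le_imp_le)
  moreover have "0 \<le> d*y^2 + 1/d" using d by simp
  ultimately show ?thesis by linarith
qed

context gum begin

lemma pos_part_int: assumes "0 \<le> c"
  shows "integrable M (\<lambda>w. max (l * X i w - c) 0 ^ 3)" "expectation (\<lambda>w. max (l * X i w - c) 0 ^ 3) = 6 * exp (- c)"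
proof -
  have h: "has_bochner_integral lborel (\<lambda>t. ed t * max (t - c) 0 ^ 3) (6 * exp (- c))" by (rule C1[OF assms])
  thus "integrable M (\<lambda>w. max (l * X i w - c) 0 ^ 3)"
    using distributed_integrable[OF U_distr, of "\<lambda>t. max (t - c) 0 ^ 3"]
    by (simp add: ed_nonneg has_bochner_integral_iff)
  show "expectation (\<lambda>w. max (l * X i w - c) 0 ^ 3) = 6 * exp (- c)"
    using distributed_integral[OF U_distr, of "\<lambda>t. max (t - c) 0 ^ 3"] h
    by (simp add: ed_nonneg has_bochner_integral_iff)
qed

definition L where "L n = ln (real n)"
definition W where "W n w = ln (l * B n w) - ln (L n)"
definition Rr where "Rr w = \<bar>ln (l * X 1 w)\<bar>"

lemma W_meas[measurable]: "W n \<in> borel_measurable M"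
  unfolding W_def by measurable
lemma Rr_meas[measurable]: "Rr \<in> borel_measurable M"
  unfolding Rr_def by measurable

lemma L_pos: "3 \<le> n \<Longrightarrow> 0 < L n"
  unfolding L_def by simp

lemma W_pos_bound:
  assumes n: "3 \<le> n" and pos: "\<forall>i. 0 < X i w"
  shows "max (W n w) 0 ^ 3 \<le> (\<Sum>i\<in>{1..n}. max (l * X i w - L n) 0 ^ 3) / L n ^ 3"
proof -
  have Lp: "0 < L n" using L_pos[OF n] .
  have "B n w \<in> (\<lambda>i. X i w) ` {1..n}"
    unfolding B_def using n by (intro Max_in) auto
  then obtain j where j: "j \<in> {1..n}" "B n w = X j w" by auto
  have Tp: "0 < l * B n w" using B_pos[of n w] n pos l_pos by simp
  have "W n w = ln (l * B n w / L n)"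
    unfolding W_def using Tp Lp l_pos B_pos[of n w] n pos by (simp add: ln_div)
  also have "\<dots> \<le> l * B n w / L n - 1"
    using Tp Lp by (intro ln_le_minus_one) simp
  also have "\<dots> = (l * X j w - L n) / L n" using Lp j Tp by (auto simp: field_simps)
  finally have "W n w \<le> (l * X j w - L n) / L n" .
  hence "max (W n w) 0 \<le> max (l * X j w - L n) 0 / L n"
    using Lp by (auto simp: max_def divide_le_0_iff field_simps split: if_splits)
  hence "max (W n w) 0 ^ 3 \<le> (max (l * X j w - L n) 0 / L n) ^ 3"
    by (rule power_mono) simp
  also have "\<dots> = max (l * X j w - L n) 0 ^ 3 / L n ^ 3" by (simp add: power_divide)
  also have "\<dots> \<le> (\<Sum>i\<in>{1..n}. max (l * X i w - L n) 0 ^ 3) / L n ^ 3"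
    using Lp j by (intro divide_right_mono member_le_sum) auto
  finally show ?thesis .
qed

lemma W_neg_basic:
  assumes n: "3 \<le> n" and pos: "\<forall>i. 0 < X i w"
  shows "max (- W n w) 0 \<le> \<bar>ln (L n)\<bar> + Rr w"
proof -
  have T1: "l * X 1 w \<le> l * B n w" using X1_le_B[of n w] n l_pos by simp
  have p1: "0 < l * X 1 w" using pos l_pos by simp
  have "ln (l * X 1 w) \<le> ln (l * B n w)" using T1 p1 by simp
  hence "- W n w \<le> \<bar>ln (L n)\<bar> + Rr w" unfolding W_def Rr_def by linarith
  moreover have "0 \<le> \<bar>ln (L n)\<bar> + Rr w" unfolding Rr_def by simp
  ultimately show ?thesis by simp
qed

lemma W_neg_bound:
  assumes n: "3 \<le> n" and pos: "\<forall>i. 0 < X i w" and e: "0 < \<epsilon>" and d: "0 < \<delta>" and w: "w \<in> space M"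
  defines "I \<equiv> indicator {w \<in> space M. l * B n w \<le> L n * exp (- \<epsilon>)} w"
  shows "max (- W n w) 0 ^ 3 \<le> \<epsilon> ^ 3 + 4 * \<bar>ln (L n)\<bar> ^ 3 * I + 4 * \<delta> * Rr w ^ 6 + 4 / \<delta> * I"
proof (cases "l * B n w \<le> L n * exp (- \<epsilon>)")
  case False
  have Lp: "0 < L n" using L_pos[OF n] .
  have Tp: "0 < l * B n w" using B_pos[of n w] n pos l_pos by simp
  have "ln (L n * exp (- \<epsilon>)) < ln (l * B n w)" using False Lp Tp by simp
  hence "ln (L n) - \<epsilon> < ln (l * B n w)" using Lp by (simp add: ln_mult)
  hence "max (- W n w) 0 \<le> \<epsilon>" unfolding W_def using e by simp
  hence "max (- W n w) 0 ^ 3 \<le> \<epsilon> ^ 3" by (rule power_mono) simp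
  moreover have "0 \<le> 4 * \<bar>ln (L n)\<bar> ^ 3 * I + 4 * \<delta> * Rr w ^ 6 + 4 / \<delta> * I"
    unfolding I_def using d by (intro add_nonneg_nonneg) auto
  ultimately show ?thesis by linarith
next
  case True
  hence I1: "I = 1" unfolding I_def using w by simp
  have R0: "0 \<le> Rr w" unfolding Rr_def by simp
  have "max (- W n w) 0 ^ 3 \<le> (\<bar>ln (L n)\<bar> + Rr w) ^ 3"
    by (rule power_mono[OF W_neg_basic[OF n pos]]) simp
  also have "\<dots> \<le> 4 * (\<bar>ln (L n)\<bar> ^ 3 + Rr w ^ 3)" using R0 by (intro cube_sum_le) auto
  also have "Rr w ^ 3 \<le> \<delta> * (Rr w ^ 3) ^ 2 + 1 / \<delta>" using d by (rule amgm_R)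
  hence "4 * (\<bar>ln (L n)\<bar> ^ 3 + Rr w ^ 3) \<le> 4 * \<bar>ln (L n)\<bar> ^ 3 + 4 * \<delta> * Rr w ^ 6 + 4 / \<delta>"
    by (simp add: power_mult[symmetric])
  finally have "max (- W n w) 0 ^ 3 \<le> 4 * \<bar>ln (L n)\<bar> ^ 3 + 4 * \<delta> * Rr w ^ 6 + 4 / \<delta>" .
  moreover have "0 \<le> \<epsilon> ^ 3" using e by simp
  ultimately show ?thesis unfolding I1 by linarith
qed

lemma abs_cube_split: "\<bar>x::real\<bar> ^ 3 = max x 0 ^ 3 + max (- x) 0 ^ 3"
  by (cases "0 \<le> x") (auto simp: max_def)

lemma Rr_pow: "integrable M (\<lambda>w. Rr w ^ k)" "expectation (\<lambda>w. Rr w ^ k) = K k"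
  using R_abs[of 1 k] by (simp_all add: Rr_def[abs_def])

lemma EW3_bound:
  assumes n: "3 \<le> n" and e: "0 < \<epsilon>" and d: "0 < \<delta>"
  defines "p \<equiv> prob {w \<in> space M. l * B n w \<le> L n * exp (- \<epsilon>)}"
  shows "integrable M (\<lambda>w. \<bar>W n w\<bar> ^ 3)"
    and "expectation (\<lambda>w. \<bar>W n w\<bar> ^ 3) \<le> 6 / L n ^ 3 + \<epsilon> ^ 3 + 4 * \<bar>ln (L n)\<bar> ^ 3 * p + 4 * \<delta> * K 6 + 4 / \<delta> * p"
proof -
  define S where "S = {w \<in> space M. l * B n w \<le> L n * exp (- \<epsilon>)}"
  have S[measurable]: "S \<in> sets M" unfolding S_def by measurable
  have pS: "p = prob S" unfolding p_def S_def ..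
  define f1 where "f1 w = (\<Sum>i\<in>{1..n}. max (l * X i w - L n) 0 ^ 3) / L n ^ 3" for w
  define f2 where "f2 w = \<epsilon> ^ 3 + 4 * \<bar>ln (L n)\<bar> ^ 3 * indicator S w + 4 * \<delta> * Rr w ^ 6 + 4 / \<delta> * indicator S w" for w
  define f3 where "f3 w = 4 * \<bar>ln (L n)\<bar> ^ 3 + 4 * Rr w ^ 3" for w
  have Lp: "0 < L n" by (rule L_pos[OF n])
  have i1: "integrable M f1"
    unfolding f1_def using Lp
    by (intro integrable_divide Bochner_Integration.integrable_sum pos_part_int) auto
  have "expectation f1 = (\<Sum>i\<in>{1..n}. expectation (\<lambda>w. max (l * X i w - L n) 0 ^ 3)) / L n ^ 3"
    unfolding f1_def using Lp
    by (simp add: Bochner_Integration.integral_sum pos_part_int)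
  also have "\<dots> = (\<Sum>i\<in>{1..n}. 6 * exp (- L n)) / L n ^ 3"
    using Lp by (simp add: pos_part_int)
  also have "\<dots> = 6 / L n ^ 3"
    using n unfolding L_def by (simp add: exp_minus)
  finally have E1: "expectation f1 = 6 / L n ^ 3" .
  have iS: "integrable M (indicator S :: 'a \<Rightarrow> real)"
    by (rule integrable_real_indicator) (auto simp: S emeasure_eq_measure)
  have i2: "integrable M f2"
    unfolding f2_def using iS Rr_pow(1)[of 6]
    by (intro Bochner_Integration.integrable_add integrable_mult_right integrable_const) auto
  have E2: "expectation f2 = \<epsilon> ^ 3 + 4 * \<bar>ln (L n)\<bar> ^ 3 * p + 4 * \<delta> * K 6 + 4 / \<delta> * p"
    unfolding f2_def pS using iS Rr_pow[of 6]
    by (simp add: Bochner_Integration.integral_add integrable_mult_right Bochner_Integration.integrable_add prob_space)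
  have i3: "integrable M f3"
    unfolding f3_def using Rr_pow(1)[of 3]
    by (intro Bochner_Integration.integrable_add integrable_mult_right integrable_const) auto
  show iW: "integrable M (\<lambda>w. \<bar>W n w\<bar> ^ 3)"
  proof (rule Bochner_Integration.integrable_bound)
    show "integrable M (\<lambda>w. f1 w + f3 w)" using i1 i3 by (rule Bochner_Integration.integrable_add)
    show "(\<lambda>w. \<bar>W n w\<bar> ^ 3) \<in> borel_measurable M" by measurable
    show "AE w in M. norm (\<bar>W n w\<bar> ^ 3) \<le> norm (f1 w + f3 w)"
      using AE_pos
    proof eventually_elim
      case (elim w)
      have a: "max (W n w) 0 ^ 3 \<le> f1 w" unfolding f1_def by (rule W_pos_bound[OF n elim])
      have "max (- W n w) 0 ^ 3 \<le> (\<bar>ln (L n)\<bar> + Rr w) ^ 3"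
        by (rule power_mono[OF W_neg_basic[OF n elim]]) simp
      also have "\<dots> \<le> f3 w" unfolding f3_def using cube_sum_le[of "\<bar>ln (L n)\<bar>" "Rr w"] by (simp add: Rr_def)
      finally have b: "max (- W n w) 0 ^ 3 \<le> f3 w" .
      have "0 \<le> max (W n w) 0 ^ 3" "0 \<le> max (- W n w) 0 ^ 3" by auto
      thus ?case using a b by (simp add: abs_cube_split)
    qed
  qed
  have "expectation (\<lambda>w. \<bar>W n w\<bar> ^ 3) \<le> expectation (\<lambda>w. f1 w + f2 w)"
  proof (rule integral_mono_AE)
    show "integrable M (\<lambda>w. f1 w + f2 w)" using i1 i2 by (rule Bochner_Integration.integrable_add)
    show "integrable M (\<lambda>w. \<bar>W n w\<bar> ^ 3)" by (rule iW)
    show "AE w in M. \<bar>W n w\<bar> ^ 3 \<le> f1 w + f2 w"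
      using AE_pos AE_space
    proof eventually_elim
      case (elim w)
      have a: "max (W n w) 0 ^ 3 \<le> f1 w" unfolding f1_def by (rule W_pos_bound[OF n elim(1)])
      have b: "max (- W n w) 0 ^ 3 \<le> f2 w"
        unfolding f2_def S_def by (rule W_neg_bound[OF n elim(1) e d elim(2)])
      show ?case using a b by (simp add: abs_cube_split)
    qed
  qed
  also have "\<dots> = expectation f1 + expectation f2"
    using i1 i2 by (rule Bochner_Integration.integral_add)
  finally show "expectation (\<lambda>w. \<bar>W n w\<bar> ^ 3) \<le> 6 / L n ^ 3 + \<epsilon> ^ 3 + 4 * \<bar>ln (L n)\<bar> ^ 3 * p + 4 * \<delta> * K 6 + 4 / \<delta> * p"
    using E1 E2 by simp
qed

lemma p_bound:
  assumes n: "3 \<le> n" and e: "0 < \<epsilon>"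
  shows "prob {w \<in> space M. l * B n w \<le> L n * exp (- \<epsilon>)} \<le> exp (- (real n powr (1 - exp (- \<epsilon>))))"
proof -
  define c where "c = L n * exp (- \<epsilon>) / l"
  have Lp: "0 < L n" by (rule L_pos[OF n])
  have c0: "0 \<le> c" unfolding c_def using Lp l_pos by simp
  have "{w \<in> space M. l * B n w \<le> L n * exp (- \<epsilon>)} = {w \<in> space M. B n w \<le> c}"
    unfolding c_def using l_pos by (auto simp: pos_le_divide_eq mult.commute)
  hence "prob {w \<in> space M. l * B n w \<le> L n * exp (- \<epsilon>)} = (1 - exp (- c * l)) ^ n"
    using B_le[of n c] n c0 by simp
  also have "exp (- c * l) = real n powr (- exp (- \<epsilon>))"
    unfolding c_def L_def using l_pos n by (simp add: powr_def)
  finally have pe: "prob {w \<in> space M. l * B n w \<le> L n * exp (- \<epsilon>)} = (1 - real n powr (- exp (- \<epsilon>))) ^ n" .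
  define x where "x = real n powr (- exp (- \<epsilon>))"
  have x0: "0 \<le> x" unfolding x_def by simp
  have x1: "x \<le> 1" unfolding x_def using powr_mono[of "- exp (- \<epsilon>)" 0 "real n"] n by simp
  have "(1 - x) ^ n \<le> exp (- x) ^ n"
    using x1 by (intro power_mono) (use exp_ge_add_one_self[of "- x"] in auto)
  also have "\<dots> = exp (- (real n * x))" by (simp add: exp_of_nat_mult[symmetric])
  also have "real n * x = real n powr (1 - exp (- \<epsilon>))"
    unfolding x_def using n by (simp add: powr_diff powr_minus divide_inverse)
  finally show ?thesis using pe x_def by simp
qed

lemma EW3_tendsto: "(\<lambda>n. expectation (\<lambda>w. \<bar>W n w\<bar> ^ 3)) \<longlonglongrightarrow> 0"
proof (rule tendstoI)
  fix e :: real assume e: "0 < e"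
  define \<epsilon> where "\<epsilon> = min 1 (e / 2)"
  have \<epsilon>: "0 < \<epsilon>" "\<epsilon> \<le> 1" "\<epsilon> \<le> e / 2" unfolding \<epsilon>_def using e by auto
  have \<epsilon>3: "\<epsilon> ^ 3 \<le> e / 2"
  proof -
    have "\<epsilon> ^ 3 \<le> \<epsilon> ^ 1" using \<epsilon> by (intro power_decreasing) auto
    thus ?thesis using \<epsilon> by simp
  qed
  define c where "c = 1 - exp (- \<epsilon>)"
  have c: "0 < c" unfolding c_def using \<epsilon> by simp
  define g where "g n = 6 / L n ^ 3 + 4 * \<bar>ln (L n)\<bar> ^ 3 * exp (- (real n powr c))
      + 4 * exp (- (real n powr c) / 2) * K 6 + 4 * exp (- (real n powr c) / 2)" for n
  have g0: "g \<longlonglongrightarrow> 0"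
  proof -
    have t1: "(\<lambda>n::nat. 6 / ln (real n) ^ 3) \<longlonglongrightarrow> 0" by real_asymp
    have t2: "(\<lambda>n::nat. 4 * \<bar>ln (ln (real n))\<bar> ^ 3 * exp (- (real n powr c))) \<longlonglongrightarrow> 0"
      using c by real_asymp
    have t3: "(\<lambda>n::nat. 4 * exp (- (real n powr c) / 2)) \<longlonglongrightarrow> 0"
      using c by real_asymp
    have t4: "(\<lambda>n::nat. 4 * exp (- (real n powr c) / 2) * K 6) \<longlonglongrightarrow> 0"
      using tendsto_mult_left_zero[OF t3, of "K 6"] by simp
    have "(\<lambda>n. 6 / ln (real n) ^ 3 + 4 * \<bar>ln (ln (real n))\<bar> ^ 3 * exp (- (real n powr c))
      + 4 * exp (- (real n powr c) / 2) * K 6 + 4 * exp (- (real n powr c) / 2)) \<longlonglongrightarrow> 0 + 0 + 0 + 0"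
      by (intro tendsto_add t1 t2 t3 t4)
    thus ?thesis unfolding g_def[abs_def] L_def by simp
  qed
  hence "eventually (\<lambda>n. g n < e / 2) sequentially"
    using e by (auto dest: order_tendstoD(2)[where a="e/2"])
  moreover have "eventually (\<lambda>n. 3 \<le> n) sequentially" by (rule eventually_ge_at_top)
  ultimately show "eventually (\<lambda>n. dist (expectation (\<lambda>w. \<bar>W n w\<bar> ^ 3)) 0 < e) sequentially"
  proof eventually_elim
    case (elim n)
    define \<delta> where "\<delta> = exp (- (real n powr c) / 2)"
    have d: "0 < \<delta>" unfolding \<delta>_def by simp
    define p where "p = prob {w \<in> space M. l * B n w \<le> L n * exp (- \<epsilon>)}"
    have pq: "p \<le> exp (- (real n powr c))" unfolding p_def c_def by (rule p_bound[OF elim(2) \<epsilon>(1)])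
    have p0: "0 \<le> p" unfolding p_def by simp
    have b: "expectation (\<lambda>w. \<bar>W n w\<bar> ^ 3) \<le> 6 / L n ^ 3 + \<epsilon> ^ 3 + 4 * \<bar>ln (L n)\<bar> ^ 3 * p + 4 * \<delta> * K 6 + 4 / \<delta> * p"
      unfolding p_def by (rule EW3_bound(2)[OF elim(2) \<epsilon>(1) d])
    have b1: "4 * \<bar>ln (L n)\<bar> ^ 3 * p \<le> 4 * \<bar>ln (L n)\<bar> ^ 3 * exp (- (real n powr c))"
      using pq by (intro mult_left_mono) auto
    have "4 / \<delta> * p \<le> 4 / \<delta> * exp (- (real n powr c))"
      using pq d by (intro mult_left_mono) auto
    also have "4 / \<delta> * exp (- (real n powr c)) = 4 * exp (- (real n powr c) / 2)"
      unfolding \<delta>_def by (simp add: exp_diff[symmetric] field_simps exp_minus)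
    finally have b2: "4 / \<delta> * p \<le> 4 * exp (- (real n powr c) / 2)" .
    have "expectation (\<lambda>w. \<bar>W n w\<bar> ^ 3) \<le> \<epsilon> ^ 3 + g n"
      using b b1 b2 unfolding g_def \<delta>_def by simp
    hence "expectation (\<lambda>w. \<bar>W n w\<bar> ^ 3) < e" using \<epsilon>3 elim(1) by simp
    moreover have "0 \<le> expectation (\<lambda>w. \<bar>W n w\<bar> ^ 3)" by (intro integral_nonneg_AE) auto
    ultimately show ?case by simp
  qed
qed

end



lemma key_ab:
  fixes a b d :: real
  assumes a: "1 \<le> a" and b: "0 \<le> b" and d: "0 < d" "d \<le> 1"
  shows "a^2 * b \<le> d * a^3 + b^3 / d^2" "a * b^2 \<le> d * a^3 + b^3 / d^2" "b^3 \<le> d * a^3 + b^3 / d^2"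
proof -
  have a0: "0 \<le> a" using a by simp
  have t0: "0 \<le> d * a^3" "0 \<le> b^3 / d^2" using a0 b d by auto
  have dd: "d^2 \<le> 1" using d by (simp add: power_le_one)
  have "b^3 * d^2 \<le> b^3" using dd b by (intro mult_left_le) auto
  hence b3: "b^3 \<le> b^3 / d^2" using d by (simp add: field_simps)
  show "b^3 \<le> d * a^3 + b^3 / d^2" using b3 t0 by linarith
  show "a^2 * b \<le> d * a^3 + b^3 / d^2"
  proof (cases "b \<le> d * a")
    case True
    have "a^2 * b \<le> a^2 * (d * a)" using True by (intro mult_left_mono) auto
    thus ?thesis using t0 by (simp add: power2_eq_square power3_eq_cube algebra_simps)
  next
    case False
    hence "a \<le> b / d" using d by (simp add: field_simps)
    hence "a^2 \<le> (b/d)^2" using a0 by (intro power_mono) auto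
    hence "a^2 * b \<le> (b/d)^2 * b" using b by (intro mult_right_mono) auto
    thus ?thesis using t0 by (simp add: power2_eq_square power3_eq_cube field_simps)
  qed
  show "a * b^2 \<le> d * a^3 + b^3 / d^2"
  proof (cases "b \<le> d * a")
    case True
    have "a * b^2 \<le> a * (d * a)^2" using True b a0 by (intro mult_left_mono power_mono) auto
    also have "\<dots> = d^2 * a^3" by (simp add: power2_eq_square power3_eq_cube)
    also have "\<dots> \<le> d * a^3" using d a0 by (intro mult_right_mono) (auto simp: power2_eq_square)
    finally show ?thesis using t0 by linarith
  next
    case False
    hence "a \<le> b / d" using d by (simp add: field_simps)
    hence "a * b^2 \<le> b / d * b^2" using b by (intro mult_right_mono) auto
    also have "\<dots> = b^3 / d" by (simp add: power2_eq_square power3_eq_cube)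
    also have "\<dots> \<le> b^3 / d^2"
      using d b by (intro divide_left_mono) (auto simp: power2_eq_square mult_le_cancel_left1)
    finally show ?thesis using t0 by linarith
  qed
qed

lemma pow_diff_bound:
  fixes z w d :: real
  assumes d: "0 < d" "d \<le> 1" and k: "1 \<le> k" "k \<le> 3"
  shows "\<bar>(z + w) ^ k - z ^ k\<bar> \<le> 7 * (d * (1 + \<bar>z\<bar> ^ 3) + \<bar>w\<bar> ^ 3 / d^2)"
proof -
  define a where "a = max 1 \<bar>z\<bar>"
  define b where "b = \<bar>w\<bar>"
  define Bd where "Bd = d * (1 + \<bar>z\<bar> ^ 3) + \<bar>w\<bar> ^ 3 / d^2"
  have a1: "1 \<le> a" and za: "\<bar>z\<bar> \<le> a" unfolding a_def by auto
  have b0: "0 \<le> b" unfolding b_def by simp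
  have a3: "a^3 \<le> 1 + \<bar>z\<bar>^3" unfolding a_def by (auto simp: max_def)
  have da: "d * a^3 \<le> d * (1 + \<bar>z\<bar>^3)" using a3 d by (intro mult_left_mono) auto
  have K1: "a^2 * b \<le> Bd" "a * b^2 \<le> Bd" "b^3 \<le> Bd"
    using key_ab[OF a1 b0 d] da unfolding Bd_def b_def by linarith+
  have z2: "\<bar>z\<bar>^2 \<le> a^2" using za by (intro power_mono) auto
  have Bd0: "0 \<le> Bd" unfolding Bd_def using d by auto
  consider "k = 1" | "k = 2" | "k = 3" using k by linarith
  thus ?thesis
  proof cases
    case 1
    have "b \<le> a^2 * b" using a1 b0 by (simp add: mult_le_cancel_right1 one_le_power)
    thus ?thesis using 1 K1 Bd0 unfolding Bd_def b_def by simp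
  next
    case 2
    have "\<bar>(z + w) ^ k - z ^ k\<bar> = \<bar>2 * z * w + w^2\<bar>" using 2 by (simp add: power2_eq_square algebra_simps)
    also have "\<dots> \<le> 2 * \<bar>z\<bar> * b + b^2" unfolding b_def by (simp add: abs_mult power2_eq_square abs_triangle_ineq[THEN order_trans])
    finally have e1: "\<bar>(z + w) ^ k - z ^ k\<bar> \<le> 2 * \<bar>z\<bar> * b + b^2" .
    have "a \<le> a * a" using a1 by (simp add: mult_le_cancel_left1)
    hence "\<bar>z\<bar> \<le> a^2" using za by (simp add: power2_eq_square)
    hence e2: "\<bar>z\<bar> * b \<le> a^2 * b" using b0 by (intro mult_right_mono) auto
    have e3: "b^2 \<le> a * b^2" using a1 by (simp add: mult_le_cancel_right1)
    have "\<bar>(z + w) ^ k - z ^ k\<bar> \<le> 7 * Bd" using e1 e2 e3 K1 Bd0 by linarith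
    thus ?thesis unfolding Bd_def .
  next
    case 3
    have "\<bar>(z + w) ^ k - z ^ k\<bar> = \<bar>3 * z^2 * w + 3 * z * w^2 + w^3\<bar>"
      using 3 by (simp add: power2_eq_square power3_eq_cube algebra_simps)
    also have "\<dots> \<le> 3 * \<bar>z\<bar>^2 * b + 3 * \<bar>z\<bar> * b^2 + b^3"
      unfolding b_def by (simp add: abs_mult power_abs abs_triangle_ineq[THEN order_trans] add_mono)
    also have "\<dots> \<le> 3 * (a^2 * b) + 3 * (a * b^2) + b^3"
    proof -
      have "\<bar>z\<bar>^2 * b \<le> a^2 * b" using z2 b0 by (rule mult_right_mono)
      moreover have "\<bar>z\<bar> * b^2 \<le> a * b^2" using za by (rule mult_right_mono) simp
      ultimately show ?thesis by simp
    qed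
    also have "\<dots> \<le> 7 * Bd" using K1 Bd0 by linarith
    finally show ?thesis unfolding Bd_def .
  qed
qed

context gum begin

lemma Wabs3_int: "3 \<le> n \<Longrightarrow> integrable M (\<lambda>w. \<bar>W n w\<bar> ^ 3)"
  using EW3_bound(1)[of n 1 1] by simp

lemma K_nonneg: "0 \<le> K k"
  unfolding K_def by (intro integral_nonneg_AE) (auto simp: ed_nonneg)

lemma dom_int: assumes "3 \<le> n" "0 < d"
  shows "integrable M (\<lambda>w. 7 * (d * (1 + \<bar>Z n w\<bar> ^ 3) + \<bar>W n w\<bar> ^ 3 / d^2))"
  using assms Z_abs(1)[of n 3] Wabs3_int[of n]
  by (intro integrable_mult_right Bochner_Integration.integrable_add integrable_const integrable_divide) auto

lemma dom_E: assumes "3 \<le> n" "0 < d"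
  shows "expectation (\<lambda>w. 7 * (d * (1 + \<bar>Z n w\<bar> ^ 3) + \<bar>W n w\<bar> ^ 3 / d^2))
     = 7 * (d * (1 + K 3) + expectation (\<lambda>w. \<bar>W n w\<bar> ^ 3) / d^2)"
  using assms Z_abs[of n 3] Wabs3_int[of n]
  by (simp add: Bochner_Integration.integral_add integrable_mult_right Bochner_Integration.integrable_add prob_space)

lemma YZW_int: assumes n: "3 \<le> n" and k: "1 \<le> k" "k \<le> 3"
  shows "integrable M (\<lambda>w. (Z n w + W n w) ^ k)"
proof (rule Bochner_Integration.integrable_bound)
  show "integrable M (\<lambda>w. \<bar>Z n w\<bar> ^ k + 7 * (1 * (1 + \<bar>Z n w\<bar> ^ 3) + \<bar>W n w\<bar> ^ 3 / 1^2))"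
    using n Z_abs(1)[of n k] dom_int[of n 1] by (intro Bochner_Integration.integrable_add) auto
  show "(\<lambda>w. (Z n w + W n w) ^ k) \<in> borel_measurable M" by measurable
  show "AE w in M. norm ((Z n w + W n w) ^ k) \<le> norm (\<bar>Z n w\<bar> ^ k + 7 * (1 * (1 + \<bar>Z n w\<bar> ^ 3) + \<bar>W n w\<bar> ^ 3 / 1^2))"
  proof (rule AE_I2)
    fix w
    have "\<bar>(Z n w + W n w) ^ k\<bar> \<le> \<bar>Z n w ^ k\<bar> + \<bar>(Z n w + W n w) ^ k - Z n w ^ k\<bar>" by linarith
    also have "\<dots> \<le> \<bar>Z n w\<bar> ^ k + 7 * (1 * (1 + \<bar>Z n w\<bar> ^ 3) + \<bar>W n w\<bar> ^ 3 / 1^2)"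
      using pow_diff_bound[of 1 k "Z n w" "W n w"] k by (simp add: power_abs)
    finally show "norm ((Z n w + W n w) ^ k) \<le> norm (\<bar>Z n w\<bar> ^ k + 7 * (1 * (1 + \<bar>Z n w\<bar> ^ 3) + \<bar>W n w\<bar> ^ 3 / 1^2))"
      by simp
  qed
qed

lemma moment_conv: assumes k: "1 \<le> k" "k \<le> 3"
  shows "(\<lambda>n. expectation (\<lambda>w. (Z n w + W n w) ^ k)) \<longlonglongrightarrow> mu k"
proof (rule tendstoI)
  fix e :: real assume e: "0 < e"
  define d where "d = min 1 (e / (14 * (1 + K 3)))"
  have K3: "0 \<le> K 3" by (rule K_nonneg)
  have d: "0 < d" "d \<le> 1" unfolding d_def using e K3 by auto
  have "d * (1 + K 3) \<le> e / (14 * (1 + K 3)) * (1 + K 3)"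
    unfolding d_def using K3 by (intro mult_right_mono) auto
  moreover have "e / (14 * (1 + K 3)) * (1 + K 3) = e / 14" using K3 by (simp add: field_simps)
  ultimately have d2: "7 * (d * (1 + K 3)) \<le> e / 2" by linarith
  have "eventually (\<lambda>n. expectation (\<lambda>w. \<bar>W n w\<bar> ^ 3) < e * d^2 / 14) sequentially"
    using EW3_tendsto e d by (intro order_tendstoD(2)) auto
  moreover have "eventually (\<lambda>n. 3 \<le> n) sequentially" by (rule eventually_ge_at_top)
  ultimately show "eventually (\<lambda>n. dist (expectation (\<lambda>w. (Z n w + W n w) ^ k)) (mu k) < e) sequentially"
  proof eventually_elim
    case (elim n)
    have n1: "1 \<le> n" using elim(2) by simp
    have iY: "integrable M (\<lambda>w. (Z n w + W n w) ^ k)" by (rule YZW_int[OF elim(2) k])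
    have iZ: "integrable M (\<lambda>w. Z n w ^ k)" by (rule Z_pow(1)[OF n1])
    have "dist (expectation (\<lambda>w. (Z n w + W n w) ^ k)) (mu k)
        = \<bar>expectation (\<lambda>w. (Z n w + W n w) ^ k - Z n w ^ k)\<bar>"
      using iY iZ Z_pow(2)[OF n1, of k] by (simp add: dist_real_def Bochner_Integration.integral_diff)
    also have "\<dots> \<le> expectation (\<lambda>w. \<bar>(Z n w + W n w) ^ k - Z n w ^ k\<bar>)"
      using integral_norm_bound[of M "\<lambda>w. (Z n w + W n w) ^ k - Z n w ^ k"] by simp
    also have "\<dots> \<le> expectation (\<lambda>w. 7 * (d * (1 + \<bar>Z n w\<bar> ^ 3) + \<bar>W n w\<bar> ^ 3 / d^2))"
    proof (rule Bochner_Integration.integral_mono)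
      show "integrable M (\<lambda>w. \<bar>(Z n w + W n w) ^ k - Z n w ^ k\<bar>)"
        using iY iZ by (intro integrable_abs Bochner_Integration.integrable_diff)
      show "integrable M (\<lambda>w. 7 * (d * (1 + \<bar>Z n w\<bar> ^ 3) + \<bar>W n w\<bar> ^ 3 / d^2))"
        by (rule dom_int[OF elim(2) d(1)])
      show "\<bar>(Z n w + W n w) ^ k - Z n w ^ k\<bar> \<le> 7 * (d * (1 + \<bar>Z n w\<bar> ^ 3) + \<bar>W n w\<bar> ^ 3 / d^2)" for w
        by (rule pow_diff_bound[OF d k])
    qed
    also have "\<dots> = 7 * (d * (1 + K 3) + expectation (\<lambda>w. \<bar>W n w\<bar> ^ 3) / d^2)"
      by (rule dom_E[OF elim(2) d(1)])
    also have "\<dots> < e"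
    proof -
      have "expectation (\<lambda>w. \<bar>W n w\<bar> ^ 3) / d^2 < e / 14"
        using elim(1) d by (simp add: field_simps)
      thus ?thesis using d2 unfolding distrib_left by linarith
    qed
    finally show ?case .
  qed
qed

end




context gum begin

lemma Z_lt: assumes "1 \<le> n" "\<forall>i. 0 < X i w" "Z n w < t" shows "exp (- t) < V n w"
proof -
  have Vp: "0 < V n w" unfolding V_def using A_pos[OF assms(1,2)] assms(1) l_pos by simp
  have "- t < ln (V n w)" using assms(3) unfolding Z_def by simp
  hence "exp (- t) < exp (ln (V n w))" by simp
  thus ?thesis using Vp by simp
qed

lemma V_gt_Z: assumes "1 \<le> n" "\<forall>i. 0 < X i w" "exp (- t) < V n w" shows "Z n w < t"
proof -
  have Vp: "0 < V n w" unfolding V_def using A_pos[OF assms(1,2)] assms(1) l_pos by simp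
  have "ln (exp (- t)) < ln (V n w)" using assms(3) Vp by (subst ln_less_cancel_iff) auto
  thus ?thesis unfolding Z_def by simp
qed

lemma W_markov: assumes n: "3 \<le> n" and e: "0 < \<epsilon>"
  shows "prob {w \<in> space M. \<epsilon> \<le> \<bar>W n w\<bar>} \<le> expectation (\<lambda>w. \<bar>W n w\<bar> ^ 3) / \<epsilon> ^ 3"
proof -
  have "{w \<in> space M. \<epsilon> \<le> \<bar>W n w\<bar>} = {w \<in> space M. \<bar>W n w\<bar> ^ 3 \<ge> \<epsilon> ^ 3}"
    using e by (auto simp: power_mono_iff)
  moreover have "measure M {w \<in> space M. \<bar>W n w\<bar> ^ 3 \<ge> \<epsilon> ^ 3} \<le> expectation (\<lambda>w. \<bar>W n w\<bar> ^ 3) / \<epsilon> ^ 3"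
    using Wabs3_int[OF n] e by (intro integral_Markov_inequality_measure[where A="space M"]) auto
  ultimately show ?thesis by simp
qed

lemma weak_part:
  fixes Y :: "nat \<Rightarrow> 'a \<Rightarrow> real"
  assumes Ymeas[measurable]: "\<And>n. Y n \<in> borel_measurable M"
    and YAE: "\<And>n. 3 \<le> n \<Longrightarrow> AE w in M. Y n w = Z n w + W n w"
  shows "(\<lambda>n. prob {w \<in> space M. Y n w \<le> x}) \<longlonglongrightarrow> exp (- exp (- x))"
proof (rule tendstoI)
  fix e :: real assume e: "0 < e"
  define F where "F y = exp (- exp (- y))" for y :: real
  have "isCont F x" unfolding F_def by (intro continuous_intros)
  then obtain d where d: "0 < d" "\<And>y. dist y x < d \<Longrightarrow> dist (F y) (F x) < e / 2"
    unfolding continuous_at_eps_delta using e by (meson half_gt_zero)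
  define \<epsilon> where "\<epsilon> = d / 3"
  have \<epsilon>: "0 < \<epsilon>" unfolding \<epsilon>_def using d by simp
  have F1: "\<bar>F (x + 2 * \<epsilon>) - F x\<bar> < e / 2" using d(2)[of "x + 2 * \<epsilon>"] d(1) unfolding \<epsilon>_def by (simp add: dist_real_def)
  have F2: "\<bar>F (x - \<epsilon>) - F x\<bar> < e / 2" using d(2)[of "x - \<epsilon>"] d(1) unfolding \<epsilon>_def by (simp add: dist_real_def)
  have "eventually (\<lambda>n. expectation (\<lambda>w. \<bar>W n w\<bar> ^ 3) < e / 2 * \<epsilon> ^ 3) sequentially"
    using EW3_tendsto e \<epsilon> by (intro order_tendstoD(2)) auto
  moreover have "eventually (\<lambda>n. 3 \<le> n) sequentially" by (rule eventually_ge_at_top)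
  ultimately show "eventually (\<lambda>n. dist (prob {w \<in> space M. Y n w \<le> x}) (exp (- exp (- x))) < e) sequentially"
  proof eventually_elim
    case (elim n)
    have n1: "1 \<le> n" using elim(2) by simp
    define Pw where "Pw = prob {w \<in> space M. \<epsilon> \<le> \<bar>W n w\<bar>}"
    have "Pw \<le> expectation (\<lambda>w. \<bar>W n w\<bar> ^ 3) / \<epsilon> ^ 3" unfolding Pw_def by (rule W_markov[OF elim(2) \<epsilon>])
    also have "\<dots> < e / 2" using elim(1) \<epsilon> by (simp add: field_simps)
    finally have Pw: "Pw < e / 2" .
    define P where "P = prob {w \<in> space M. Y n w \<le> x}"
    have up: "P \<le> F (x + 2 * \<epsilon>) + Pw"
    proof -
      have "P \<le> prob ({w \<in> space M. exp (- (x + 2 * \<epsilon>)) < V n w} \<union> {w \<in> space M. \<epsilon> \<le> \<bar>W n w\<bar>})"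
        unfolding P_def
      proof (rule finite_measure_mono_AE)
        show "AE w in M. w \<in> {w \<in> space M. Y n w \<le> x} \<longrightarrow>
            w \<in> {w \<in> space M. exp (- (x + 2 * \<epsilon>)) < V n w} \<union> {w \<in> space M. \<epsilon> \<le> \<bar>W n w\<bar>}"
          using AE_pos YAE[OF elim(2)]
        proof eventually_elim
          case (elim w)
          show ?case
          proof (intro impI)
            assume w: "w \<in> {w \<in> space M. Y n w \<le> x}"
            show "w \<in> {w \<in> space M. exp (- (x + 2 * \<epsilon>)) < V n w} \<union> {w \<in> space M. \<epsilon> \<le> \<bar>W n w\<bar>}"
            proof (cases "\<epsilon> \<le> \<bar>W n w\<bar>")
              case False
              hence "Z n w < x + 2 * \<epsilon>" using w elim(2) \<epsilon> by auto
              hence "exp (- (x + 2 * \<epsilon>)) < V n w" by (rule Z_lt[OF n1 elim(1)])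
              thus ?thesis using w by auto
            qed (use w in auto)
          qed
        qed
      qed measurable
      also have "\<dots> \<le> prob {w \<in> space M. exp (- (x + 2 * \<epsilon>)) < V n w} + Pw"
        unfolding Pw_def by (rule measure_Un_le) measurable
      also have "prob {w \<in> space M. exp (- (x + 2 * \<epsilon>)) < V n w} = F (x + 2 * \<epsilon>)"
        unfolding F_def by (rule V_gt[OF n1]) simp
      finally show ?thesis .
    qed
    have lo: "F (x - \<epsilon>) \<le> P + Pw"
    proof -
      have "F (x - \<epsilon>) = prob {w \<in> space M. exp (- (x - \<epsilon>)) < V n w}"
        unfolding F_def by (rule V_gt[OF n1, symmetric]) simp
      also have "\<dots> \<le> prob ({w \<in> space M. Y n w \<le> x} \<union> {w \<in> space M. \<epsilon> \<le> \<bar>W n w\<bar>})"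
      proof (rule finite_measure_mono_AE)
        show "AE w in M. w \<in> {w \<in> space M. exp (- (x - \<epsilon>)) < V n w} \<longrightarrow>
            w \<in> {w \<in> space M. Y n w \<le> x} \<union> {w \<in> space M. \<epsilon> \<le> \<bar>W n w\<bar>}"
          using AE_pos YAE[OF elim(2)]
        proof eventually_elim
          case (elim w)
          show ?case
          proof (intro impI)
            assume w: "w \<in> {w \<in> space M. exp (- (x - \<epsilon>)) < V n w}"
            hence "Z n w < x - \<epsilon>" using V_gt_Z[OF n1 elim(1)] by auto
            thus "w \<in> {w \<in> space M. Y n w \<le> x} \<union> {w \<in> space M. \<epsilon> \<le> \<bar>W n w\<bar>}"
              using w elim(2) by auto
          qed
        qed
      qed measurable
      also have "\<dots> \<le> P + Pw"
        unfolding Pw_def P_def by (rule measure_Un_le) measurable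
      finally show ?thesis .
    qed
    have Pw0: "0 \<le> Pw" unfolding Pw_def by simp
    have "\<bar>P - F x\<bar> < e" using up lo F1 F2 Pw Pw0 by linarith
    thus ?case unfolding P_def F_def by (simp add: dist_real_def)
  qed
qed

end



lemma (in prob_space) poly_int:
  fixes Y :: "'a \<Rightarrow> real"
  assumes i1: "integrable M Y" and i2: "integrable M (\<lambda>w. Y w ^ 2)" and i3: "integrable M (\<lambda>w. Y w ^ 3)"
  shows "expectation (\<lambda>w. c3 * Y w ^ 3 + c2 * Y w ^ 2 + c1 * Y w + c0)
    = c3 * expectation (\<lambda>w. Y w ^ 3) + c2 * expectation (\<lambda>w. Y w ^ 2) + c1 * expectation Y + c0"
  using i1 i2 i3
  by (simp add: Bochner_Integration.integral_add Bochner_Integration.integrable_add integrable_mult_right prob_space)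

lemma (in prob_space) affine_stats:
  fixes Y Mv :: "'a \<Rightarrow> real" and a b :: real
  assumes b: "0 < b" and i1: "integrable M Y" and i2: "integrable M (\<lambda>w. Y w ^ 2)" and i3: "integrable M (\<lambda>w. Y w ^ 3)"
    and eq: "\<And>w. Mv w = a + b * Y w"
  shows "expectation Mv = a + b * expectation Y"
    and "variance Mv = b^2 * (expectation (\<lambda>w. Y w ^ 2) - (expectation Y)^2)"
    and "skewness Mv = (expectation (\<lambda>w. Y w ^ 3) - 3 * expectation Y * expectation (\<lambda>w. Y w ^ 2) + 2 * (expectation Y)^3)
            / sqrt (expectation (\<lambda>w. Y w ^ 2) - (expectation Y)^2) ^ 3"
proof -
  define m1 where "m1 = expectation Y"
  define m2 where "m2 = expectation (\<lambda>w. Y w ^ 2)"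
  define m3 where "m3 = expectation (\<lambda>w. Y w ^ 3)"
  have Mv: "Mv = (\<lambda>w. a + b * Y w)" using eq by auto
  have EM: "expectation Mv = a + b * m1"
    unfolding Mv m1_def using i1 by (simp add: prob_space)
  thus "expectation Mv = a + b * expectation Y" unfolding m1_def .
  have "variance Mv = expectation (\<lambda>w. 0 * Y w ^ 3 + b^2 * Y w ^ 2 + (- 2 * b^2 * m1) * Y w + b^2 * m1^2)"
    unfolding EM by (intro Bochner_Integration.integral_cong refl) (simp add: Mv power2_eq_square algebra_simps)
  also have "\<dots> = b^2 * (m2 - m1^2)"
    unfolding poly_int[OF i1 i2 i3] m1_def m2_def by (simp add: power2_eq_square algebra_simps)
  finally have V: "variance Mv = b^2 * (m2 - m1^2)" .
  thus "variance Mv = b^2 * (expectation (\<lambda>w. Y w ^ 2) - (expectation Y)^2)" unfolding m1_def m2_def .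
  define q where "q = sqrt (m2 - m1^2)"
  have sq: "sqrt (variance Mv) = b * q" unfolding V q_def using b by (simp add: real_sqrt_mult)
  have "skewness Mv = expectation (\<lambda>w. ((Mv w - expectation Mv) / sqrt (variance Mv)) ^ 3)"
    by (simp add: skewness_def)
  also have "\<dots> = expectation (\<lambda>w. (1 / q^3) * Y w ^ 3 + (- 3 * m1 / q^3) * Y w ^ 2 + (3 * m1^2 / q^3) * Y w + (- (m1^3 / q^3)))"
  proof (intro Bochner_Integration.integral_cong refl)
    fix w
    have "((Mv w - expectation Mv) / sqrt (variance Mv)) ^ 3 = (Y w - m1) ^ 3 / q ^ 3"
    proof -
      have "Mv w - (a + b * m1) = b * (Y w - m1)" by (simp add: eq algebra_simps)
      hence "(Mv w - expectation Mv) / sqrt (variance Mv) = (b * (Y w - m1)) / (b * q)"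
        unfolding sq unfolding EM by simp
      also have "\<dots> = (Y w - m1) / q" using b by simp
      finally show ?thesis by (simp add: power_divide)
    qed
    also have "\<dots> = (1 / q^3) * Y w ^ 3 + (- 3 * m1 / q^3) * Y w ^ 2 + (3 * m1^2 / q^3) * Y w + (- (m1^3 / q^3))"
      by (simp add: power2_eq_square power3_eq_cube field_simps diff_divide_distrib add_divide_distrib)
    finally show "((Mv w - expectation Mv) / sqrt (variance Mv)) ^ 3 = \<dots>" .
  qed
  also have "\<dots> = (m3 - 3 * m1 * m2 + 2 * m1^3) / q^3"
    unfolding poly_int[OF i1 i2 i3] m1_def[symmetric] m2_def[symmetric] m3_def[symmetric]
    by (simp add: field_simps power2_eq_square power3_eq_cube diff_divide_distrib add_divide_distrib)
  finally show "skewness Mv = (expectation (\<lambda>w. Y w ^ 3) - 3 * expectation Y * expectation (\<lambda>w. Y w ^ 2) + 2 * (expectation Y)^3)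
            / sqrt (expectation (\<lambda>w. Y w ^ 2) - (expectation Y)^2) ^ 3"
    unfolding q_def m1_def m2_def m3_def .
qed




lemma zeta3_pos: "0 < zeta3"
  using Polygamma_real_even_neg[of 1 2] Polygamma_2_1 by simp

lemma const_facts:
  "mu 2 - mu 1 ^ 2 = pi^2 / 6"
  "mu 3 - 3 * mu 1 * mu 2 + 2 * mu 1 ^ 3 = 2 * zeta3"
  "2 * zeta3 / sqrt (pi^2 / 6) ^ 3 = 12 * sqrt 6 * zeta3 / pi ^ 3"
proof -
  show "mu 2 - mu 1 ^ 2 = pi^2 / 6" using A4 by simp
  show "mu 3 - 3 * mu 1 * mu 2 + 2 * mu 1 ^ 3 = 2 * zeta3" using A4
    by (simp add: power2_eq_square power3_eq_cube algebra_simps)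
  have s: "sqrt (pi^2 / 6) = pi / sqrt 6" by (simp add: real_sqrt_divide)
  have s6: "sqrt 6 ^ 3 = 6 * sqrt (6::real)" by (simp add: power3_eq_cube)
  have "2 * zeta3 / sqrt (pi^2 / 6) ^ 3 = 2 * zeta3 / (pi ^ 3 / sqrt 6 ^ 3)" unfolding s power_divide ..
  also have "\<dots> = 2 * zeta3 * sqrt 6 ^ 3 / pi ^ 3" by simp
  also have "\<dots> = 12 * sqrt 6 * zeta3 / pi ^ 3" unfolding s6 by simp
  finally show "2 * zeta3 / sqrt (pi^2 / 6) ^ 3 = 12 * sqrt 6 * zeta3 / pi ^ 3" .
qed

theorem proposition1:
  fixes M :: "'a measure" and X :: "nat \<Rightarrow> 'a \<Rightarrow> real"
    and l \<rho> :: real and Mn Yn :: "nat \<Rightarrow> 'a \<Rightarrow> real"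
  assumes "prob_space M"
    and "l > 0" and "\<rho> > 1"
    and "prob_space.indep_vars M (\<lambda>_. borel) X UNIV"
    and "\<And>i. distributed M lborel (X i) (exponential_density l)"
    and "\<And>n w. Mn n w = (ln (Max ((\<lambda>i. X i w) ` {1..n})) - ln (Min ((\<lambda>i. X i w) ` {1..n})))
                          / ln \<rho> + 1"
    and "\<And>n w. Yn n w = (Mn n w - 1) * ln \<rho> - ln (real n) - ln (ln (real n))"
  shows "weak_conv (\<lambda>n. cdf (distr M borel (Yn n))) (gumbel_cdf 0 1)
    \<and> (\<lambda>n. prob_space.expectation M (Mn n))
           \<sim>[at_top] (\<lambda>n. 1 + euler_mascheroni + (ln (real n) + ln (ln (real n))) / ln \<rho>)
    \<and> (\<lambda>n. prob_space.expectation M (Mn n)) \<sim>[at_top] (\<lambda>n. ln (real n) / ln \<rho>)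
    \<and> (\<lambda>n. prob_space.variance M (Mn n)) \<sim>[at_top] (\<lambda>n. pi\<^sup>2 / (6 * (ln \<rho>)\<^sup>2))
    \<and> (\<lambda>n. prob_space.skewness M (Mn n)) \<sim>[at_top] (\<lambda>n. 12 * sqrt 6 * zeta3 / pi ^ 3)"
proof -
  interpret P: prob_space M by fact
  interpret G: gum M X l using assms(2,4,5) by unfold_locales auto
  have lr: "0 < ln \<rho>" using assms(3) by simp
  have Ydef: "Yn n w = ln (G.B n w) - ln (G.A n w) - ln (real n) - ln (ln (real n))" for n w
  proof -
    have "(Mn n w - 1) * ln \<rho> = ln (G.B n w) - ln (G.A n w)"
      unfolding G.A_def G.B_def assms(6)[of n w] using lr by simp
    thus ?thesis using assms(7)[of n w] by simp
  qed
  have Mdef: "Mn n w = (1 + (ln (real n) + ln (ln (real n))) / ln \<rho>) + (1 / ln \<rho>) * Yn n w" for n w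
  proof -
    have "Mn n w - 1 = (Yn n w + ln (real n) + ln (ln (real n))) / ln \<rho>"
      using assms(7)[of n w] lr by (simp add: field_simps)
    thus ?thesis using lr by (simp add: field_simps)
  qed
  have Ymeas[measurable]: "Yn n \<in> borel_measurable M" for n
    unfolding Ydef[abs_def] by measurable
  have YAE: "AE w in M. Yn n w = G.Z n w + G.W n w" if n: "3 \<le> n" for n
    using G.AE_pos
  proof eventually_elim
    case (elim w)
    have n1: "1 \<le> n" using n by simp
    have A: "0 < G.A n w" by (rule G.A_pos[OF n1 elim])
    have B: "0 < G.B n w" by (rule G.B_pos[OF n1 elim])
    show ?case unfolding Ydef G.Z_def G.V_def G.W_def G.L_def
      using A B n1 assms(2) by (simp add: ln_mult)
  qed
  have Yint: "integrable M (\<lambda>w. Yn n w ^ k)" if "3 \<le> n" "1 \<le> k" "k \<le> 3" for n k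
  proof -
    have int: "integrable M (\<lambda>w. (G.Z n w + G.W n w) ^ k)" by (rule G.YZW_int[OF that])
    have ae: "AE w in M. (G.Z n w + G.W n w) ^ k = Yn n w ^ k" using YAE[OF that(1)] by eventually_elim simp
    show ?thesis by (rule integrable_cong_AE_imp[OF int _ ae]) measurable
  qed
  have YE: "P.expectation (\<lambda>w. Yn n w ^ k) = P.expectation (\<lambda>w. (G.Z n w + G.W n w) ^ k)" if "3 \<le> n" for n k
  proof -
    have ae: "AE w in M. Yn n w ^ k = (G.Z n w + G.W n w) ^ k" using YAE[OF that] by eventually_elim simp
    show ?thesis by (rule integral_cong_AE[OF _ _ ae]) measurable
  qed
  define m1 where "m1 n = P.expectation (\<lambda>w. Yn n w ^ 1)" for n
  define m2 where "m2 n = P.expectation (\<lambda>w. Yn n w ^ 2)" for n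
  define m3 where "m3 n = P.expectation (\<lambda>w. Yn n w ^ 3)" for n
  have mconv: "(\<lambda>n. P.expectation (\<lambda>w. Yn n w ^ k)) \<longlonglongrightarrow> mu k" if "1 \<le> k" "k \<le> 3" for k
  proof (rule Lim_transform_eventually[OF G.moment_conv[OF that]])
    show "eventually (\<lambda>n. P.expectation (\<lambda>w. (G.Z n w + G.W n w) ^ k) = P.expectation (\<lambda>w. Yn n w ^ k)) sequentially"
      using eventually_ge_at_top[of 3] by eventually_elim (simp add: YE)
  qed
  have m1c: "m1 \<longlonglongrightarrow> mu 1" unfolding m1_def by (rule mconv) auto
  have m2c: "m2 \<longlonglongrightarrow> mu 2" unfolding m2_def by (rule mconv) auto
  have m3c: "m3 \<longlonglongrightarrow> mu 3" unfolding m3_def by (rule mconv) auto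
  have stats: "P.expectation (Mn n) = (1 + (ln (real n) + ln (ln (real n))) / ln \<rho>) + (1 / ln \<rho>) * m1 n
      \<and> P.variance (Mn n) = (1 / ln \<rho>)^2 * (m2 n - m1 n ^ 2)
      \<and> P.skewness (Mn n) = (m3 n - 3 * m1 n * m2 n + 2 * m1 n ^ 3) / sqrt (m2 n - m1 n ^ 2) ^ 3"
    if n: "3 \<le> n" for n
  proof -
    have i1: "integrable M (Yn n)" using Yint[OF n, of 1] by simp
    have i2: "integrable M (\<lambda>w. Yn n w ^ 2)" using Yint[OF n, of 2] by simp
    have i3: "integrable M (\<lambda>w. Yn n w ^ 3)" using Yint[OF n, of 3] by simp
    note S = P.affine_stats[OF _ i1 i2 i3 Mdef]
    show ?thesis using S lr unfolding m1_def m2_def m3_def by simp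
  qed
  have W: "weak_conv (\<lambda>n. cdf (distr M borel (Yn n))) (gumbel_cdf 0 1)"
    unfolding weak_conv_def
  proof (intro allI impI)
    fix x :: real
    have "cdf (distr M borel (Yn n)) x = P.prob {w \<in> space M. Yn n w \<le> x}" for n
      unfolding cdf_def by (subst measure_distr) (auto intro!: arg_cong[where f="P.prob"])
    moreover have "gumbel_cdf 0 1 x = exp (- exp (- x))" unfolding gumbel_cdf_def by simp
    ultimately show "(\<lambda>n. cdf (distr M borel (Yn n)) x) \<longlonglongrightarrow> gumbel_cdf 0 1 x"
      using G.weak_part[OF Ymeas YAE, of x] by simp
  qed
  have E1: "(\<lambda>n. P.expectation (Mn n)) \<sim>[at_top] (\<lambda>n. ln (real n) / ln \<rho>)"
  proof (rule asymp_equivI')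
    have t1: "(\<lambda>n::nat. 1 / ln (real n)) \<longlonglongrightarrow> 0" by real_asymp
    have t2: "(\<lambda>n::nat. ln (ln (real n)) / ln (real n)) \<longlonglongrightarrow> 0" by real_asymp
    have "(\<lambda>n. (ln \<rho> + m1 n) * (1 / ln (real n)) + 1 + ln (ln (real n)) / ln (real n)) \<longlonglongrightarrow> (ln \<rho> + mu 1) * 0 + 1 + 0"
      by (intro tendsto_intros m1c t1 t2)
    hence "(\<lambda>n. (ln \<rho> + m1 n) * (1 / ln (real n)) + 1 + ln (ln (real n)) / ln (real n)) \<longlonglongrightarrow> 1" by simp
    moreover have "eventually (\<lambda>n. (ln \<rho> + m1 n) * (1 / ln (real n)) + 1 + ln (ln (real n)) / ln (real n)
        = P.expectation (Mn n) / (ln (real n) / ln \<rho>)) sequentially"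
      using eventually_ge_at_top[of 3]
    proof eventually_elim
      case (elim n)
      have "0 < ln (real n)" using elim by simp
      thus ?case using stats[OF elim] lr by (simp add: field_simps)
    qed
    ultimately show "((\<lambda>n. P.expectation (Mn n) / (ln (real n) / ln \<rho>)) \<longlongrightarrow> 1) sequentially"
      by (rule Lim_transform_eventually)
  qed
  have E2: "(\<lambda>n. P.expectation (Mn n)) \<sim>[at_top] (\<lambda>n. 1 + euler_mascheroni + (ln (real n) + ln (ln (real n))) / ln \<rho>)"
  proof -
    have "(\<lambda>n::nat. 1 + euler_mascheroni + (ln (real n) + ln (ln (real n))) / ln \<rho>) \<sim>[sequentially] (\<lambda>n. ln (real n) / ln \<rho>)"
      using lr by real_asymp
    thus ?thesis using E1 by (metis asymp_equiv_sym asymp_equiv_trans)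
  qed
  have V: "(\<lambda>n. P.variance (Mn n)) \<sim>[at_top] (\<lambda>n. pi\<^sup>2 / (6 * (ln \<rho>)\<^sup>2))"
  proof (rule tendsto_imp_asymp_equiv_const)
    have "(\<lambda>n. (1 / ln \<rho>)^2 * (m2 n - m1 n ^ 2)) \<longlonglongrightarrow> (1 / ln \<rho>)^2 * (mu 2 - mu 1 ^ 2)"
      by (intro tendsto_intros m1c m2c)
    moreover have "(1 / ln \<rho>)^2 * (mu 2 - mu 1 ^ 2) = pi\<^sup>2 / (6 * (ln \<rho>)\<^sup>2)"
      unfolding const_facts(1) using lr by (simp add: power_divide)
    ultimately have "(\<lambda>n. (1 / ln \<rho>)^2 * (m2 n - m1 n ^ 2)) \<longlonglongrightarrow> pi\<^sup>2 / (6 * (ln \<rho>)\<^sup>2)" by simp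
    moreover have "eventually (\<lambda>n. (1 / ln \<rho>)^2 * (m2 n - m1 n ^ 2) = P.variance (Mn n)) sequentially"
      using eventually_ge_at_top[of 3] by eventually_elim (metis stats)
    ultimately show "(\<lambda>n. P.variance (Mn n)) \<longlonglongrightarrow> pi\<^sup>2 / (6 * (ln \<rho>)\<^sup>2)"
      by (rule Lim_transform_eventually)
    show "pi\<^sup>2 / (6 * (ln \<rho>)\<^sup>2) \<noteq> 0" using lr by simp
  qed
  have ne: "mu 2 - mu 1 ^ 2 \<noteq> 0" unfolding const_facts(1) by simp
  have S: "(\<lambda>n. P.skewness (Mn n)) \<sim>[at_top] (\<lambda>n. 12 * sqrt 6 * zeta3 / pi ^ 3)"
  proof (rule tendsto_imp_asymp_equiv_const)
    have "(\<lambda>n. (m3 n - 3 * m1 n * m2 n + 2 * m1 n ^ 3) / sqrt (m2 n - m1 n ^ 2) ^ 3)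
        \<longlonglongrightarrow> (mu 3 - 3 * mu 1 * mu 2 + 2 * mu 1 ^ 3) / sqrt (mu 2 - mu 1 ^ 2) ^ 3"
      by (intro tendsto_intros m1c m2c m3c) (use ne in simp)
    hence "(\<lambda>n. (m3 n - 3 * m1 n * m2 n + 2 * m1 n ^ 3) / sqrt (m2 n - m1 n ^ 2) ^ 3)
        \<longlonglongrightarrow> 12 * sqrt 6 * zeta3 / pi ^ 3"
      by (simp only: const_facts)
    moreover have "eventually (\<lambda>n. (m3 n - 3 * m1 n * m2 n + 2 * m1 n ^ 3) / sqrt (m2 n - m1 n ^ 2) ^ 3
        = P.skewness (Mn n)) sequentially"
      using eventually_ge_at_top[of 3] by eventually_elim (simp add: stats)
    ultimately show "(\<lambda>n. P.skewness (Mn n)) \<longlonglongrightarrow> 12 * sqrt 6 * zeta3 / pi ^ 3"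
      by (rule Lim_transform_eventually)
    show "12 * sqrt 6 * zeta3 / pi ^ 3 \<noteq> 0" using zeta3_pos by simp
  qed
  show ?thesis using W E1 E2 V S by blast
qed


end
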